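(* Let $\alpha$ be a reduced operation sequence. If a push operation of $\alpha$ is fixed, then every pop operation of $\alpha$ corresponding to it is also fixed.
   Context: Operation sequences: $\sigma[a]$ ($a\ge1$) denotes pushing the top $a$ elements of the input stack, as a block with relative order unchanged, onto the top of a working stack; $\tau[b]$ ($b\ge1$) denotes moving the top $b$ elements of the working stack, as a block with relative order unchanged, onto the top of an output stack; $\sigma=\sigma[1]$, $\tau=\tau[1]$. A well-formed operation sequence is a word $\alpha=\alpha_1\cdots\alpha_m$ in these symbols such that in every prefix the total push size is at least the total pop size, with equality for the whole word; its size $n$ is the total push size. Acting on an input stack containing $1,\dots,n$ with $1$ on top, it produces the permutation read from the final output stack top to bottom. Two well-formed sequences are equivalent if they have the same size and produce the same permutation. $\alpha$ is reduced if every consecutive pair $\alpha_i\alpha_{i+1}$ with $\alpha_i$ a push and $\alpha_{i+1}$ a pop equals $\sigma[1]\tau[1]$. The vertices of $\alpha$ are $v_0=(0,0)$ and $v_i=v_{i-1}+(a,a)$ if $\alpha_i=\sigma[a]$, $v_i=v_{i-1}+(b,-b)$ if $\alpha_i=\tau[b]$. The support of a push (resp. pop) is the set of elements it places on (resp. removes from) the working stack when $\alpha$ acts on input $1,\dots,n$. A push and a pop correspond if their supports intersect. An operation $\alpha_i$ of a reduced sequence $\alpha$ is fixed if for every reduced sequence $\beta=\beta_1\cdots\beta_{m'}$ equivalent to $\alpha$, with vertices $w_0,\dots,w_{m'}$, there is $j$ with $w_{j-1}=v_{i-1}$ and $w_j=v_i$. *)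

theory Defs
  imports Main
begin

datatype op = Push nat | Pop nat

fun is_push :: "op \<Rightarrow> bool" where
  "is_push (Push a) = True" | "is_push (Pop b) = False"

fun is_pop :: "op \<Rightarrow> bool" where
  "is_pop (Push a) = False" | "is_pop (Pop b) = True"

fun push_amt :: "op \<Rightarrow> nat" where
  "push_amt (Push a) = a" | "push_amt (Pop b) = 0"

fun pop_amt :: "op \<Rightarrow> nat" where
  "pop_amt (Push a) = 0" | "pop_amt (Pop b) = b"

fun op_amt :: "op \<Rightarrow> nat" where
  "op_amt (Push a) = a" | "op_amt (Pop b) = b"

definition seq_size :: "op list \<Rightarrow> nat" where
  "seq_size xs = sum_list (map push_amt xs)"

definition well_formed :: "op list \<Rightarrow> bool" where
  "well_formed xs \<longleftrightarrow>
     (\<forall>x \<in> set xs. op_amt x \<ge> 1) \<and>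
     (\<forall>k \<le> length xs. sum_list (map pop_amt (take k xs)) \<le> sum_list (map push_amt (take k xs))) \<and>
     sum_list (map pop_amt xs) = sum_list (map push_amt xs)"

text \<open>Configurations (input stack, working stack, output stack); lists are read top first.\<close>
type_synonym config = "nat list \<times> nat list \<times> nat list"

fun step :: "config \<Rightarrow> op \<Rightarrow> config" where
  "step (inp, wk, out) (Push a) = (drop a inp, take a inp @ wk, out)"
| "step (inp, wk, out) (Pop b) = (inp, drop b wk, take b wk @ out)"

definition init_config :: "nat \<Rightarrow> config" where
  "init_config n = ([1..<Suc n], [], [])"

definition config_at :: "op list \<Rightarrow> nat \<Rightarrow> config" where
  "config_at xs k = foldl step (init_config (seq_size xs)) (take k xs)"

definition result_perm :: "op list \<Rightarrow> nat list" where
  "result_perm xs = snd (snd (config_at xs (length xs)))"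

definition equivalent :: "op list \<Rightarrow> op list \<Rightarrow> bool" where
  "equivalent xs ys \<longleftrightarrow> well_formed xs \<and> well_formed ys \<and>
     seq_size xs = seq_size ys \<and> result_perm xs = result_perm ys"

definition reduced :: "op list \<Rightarrow> bool" where
  "reduced xs \<longleftrightarrow> (\<forall>i. Suc i < length xs \<longrightarrow> is_push (xs ! i) \<longrightarrow> is_pop (xs ! Suc i) \<longrightarrow>
      xs ! i = Push 1 \<and> xs ! Suc i = Pop 1)"

fun delta :: "op \<Rightarrow> int \<times> int" where
  "delta (Push a) = (int a, int a)"
| "delta (Pop b) = (int b, - int b)"

definition vertex :: "op list \<Rightarrow> nat \<Rightarrow> int \<times> int" where
  "vertex xs k = foldl (\<lambda>(p, q) x. (p + fst (delta x), q + snd (delta x))) (0, 0) (take k xs)"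

definition support :: "op list \<Rightarrow> nat \<Rightarrow> nat set" where
  "support xs i = (case config_at xs i of (inp, wk, out) \<Rightarrow>
     (case xs ! i of Push a \<Rightarrow> set (take a inp) | Pop b \<Rightarrow> set (take b wk)))"

definition corresponds :: "op list \<Rightarrow> nat \<Rightarrow> nat \<Rightarrow> bool" where
  "corresponds xs i j \<longleftrightarrow> is_push (xs ! i) \<and> is_pop (xs ! j) \<and> support xs i \<inter> support xs j \<noteq> {}"

definition fixed_op :: "op list \<Rightarrow> nat \<Rightarrow> bool" where
  "fixed_op xs i \<longleftrightarrow> (\<forall>ys. reduced ys \<longrightarrow> equivalent xs ys \<longrightarrow>
     (\<exists>j < length ys. vertex ys j = vertex xs i \<and> vertex ys (Suc j) = vertex xs (Suc i)))"

end

theory Submission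
  imports Defs
begin


definition PP :: "op list \<Rightarrow> nat \<Rightarrow> nat" where
  "PP s k = sum_list (map push_amt (take k s))"
definition QQ :: "op list \<Rightarrow> nat \<Rightarrow> nat" where
  "QQ s k = sum_list (map pop_amt (take k s))"
definition inpk :: "op list \<Rightarrow> nat \<Rightarrow> nat list" where "inpk s k = fst (config_at s k)"
definition wkk :: "op list \<Rightarrow> nat \<Rightarrow> nat list" where "wkk s k = fst (snd (config_at s k))"
definition outk :: "op list \<Rightarrow> nat \<Rightarrow> nat list" where "outk s k = snd (snd (config_at s k))"
definition ps :: "op list \<Rightarrow> nat \<Rightarrow> nat" where "ps s x = (LEAST k. x \<le> PP s (Suc k))"
definition Rel :: "op list \<Rightarrow> nat \<Rightarrow> nat \<Rightarrow> bool" where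
  "Rel s u v \<longleftrightarrow> ps s u > ps s v \<or> (ps s u = ps s v \<and> u < v)"

lemma config_Suc: "k < length s \<Longrightarrow> config_at s (Suc k) = step (config_at s k) (s ! k)"
  unfolding config_at_def by (simp add: take_Suc_conv_app_nth)

lemma config_0: "config_at s 0 = ([1..<Suc (seq_size s)], [], [])"
  unfolding config_at_def init_config_def by simp

lemma cfg_eq: "config_at s k = (inpk s k, wkk s k, outk s k)"
  unfolding inpk_def wkk_def outk_def by simp

lemma PP_Suc: "k < length s \<Longrightarrow> PP s (Suc k) = PP s k + push_amt (s ! k)"
  unfolding PP_def by (simp add: take_Suc_conv_app_nth)
lemma QQ_Suc: "k < length s \<Longrightarrow> QQ s (Suc k) = QQ s k + pop_amt (s ! k)"
  unfolding QQ_def by (simp add: take_Suc_conv_app_nth)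
lemma PP_ge: "length s \<le> k \<Longrightarrow> PP s k = seq_size s"
  unfolding PP_def seq_size_def by simp
lemma QQ_ge: "length s \<le> k \<Longrightarrow> QQ s k = QQ s (length s)"
  unfolding QQ_def by simp
lemma PP_0[simp]: "PP s 0 = 0" unfolding PP_def by simp
lemma QQ_0[simp]: "QQ s 0 = 0" unfolding QQ_def by simp

lemma PP_Suc_mono: "PP s k \<le> PP s (Suc k)"
  by (cases "k < length s") (auto simp: PP_Suc PP_ge)
lemma QQ_Suc_mono: "QQ s k \<le> QQ s (Suc k)"
proof (cases "k < length s")
  case False then show ?thesis using QQ_ge[of s k] QQ_ge[of s "Suc k"] by simp
qed (simp add: QQ_Suc)
lemma PP_mono: "k \<le> k' \<Longrightarrow> PP s k \<le> PP s k'"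
  using lift_Suc_mono_le[of "PP s", OF PP_Suc_mono] by blast
lemma QQ_mono: "k \<le> k' \<Longrightarrow> QQ s k \<le> QQ s k'"
  using lift_Suc_mono_le[of "QQ s", OF QQ_Suc_mono] by blast
lemma PP_le: "PP s k \<le> seq_size s"
proof (cases "k \<le> length s")
  case True then show ?thesis using PP_mono[OF True, of s] PP_ge[of s "length s"] by simp
qed (simp add: PP_ge)

lemma wf_QQ_le: "well_formed s \<Longrightarrow> QQ s k \<le> PP s k"
proof -
  assume w: "well_formed s"
  show ?thesis
  proof (cases "k \<le> length s")
    case True
    have "\<forall>k \<le> length s. sum_list (map pop_amt (take k s)) \<le> sum_list (map push_amt (take k s))"
      using w unfolding well_formed_def by (rule conjunct1[OF conjunct2])
    then show ?thesis using True unfolding PP_def QQ_def by simp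
  next
    case False
    then have "QQ s k = QQ s (length s)" "PP s k = PP s (length s)" using QQ_ge[of s k] PP_ge[of s k] PP_ge[of s "length s"] by auto
    moreover have "QQ s (length s) \<le> PP s (length s)" using w unfolding well_formed_def PP_def QQ_def by simp
    ultimately show ?thesis by simp
  qed
qed

lemma wf_QQ_len: "well_formed s \<Longrightarrow> QQ s (length s) = seq_size s"
  unfolding well_formed_def QQ_def seq_size_def by simp

lemma wf_amt: "well_formed s \<Longrightarrow> k < length s \<Longrightarrow> op_amt (s ! k) \<ge> 1"
  unfolding well_formed_def by auto

lemma ps_eq: "PP s k < x \<Longrightarrow> x \<le> PP s (Suc k) \<Longrightarrow> ps s x = k"
  unfolding ps_def
proof (rule Least_equality)
  fix m assume a: "PP s k < x" and "x \<le> PP s (Suc m)"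
  show "k \<le> m"
  proof (rule ccontr)
    assume "\<not> k \<le> m"
    then have "PP s (Suc m) \<le> PP s k" by (intro PP_mono) auto
    then show False using a \<open>x \<le> PP s (Suc m)\<close> by auto
  qed
qed auto

lemma ps_props: assumes "1 \<le> x" "x \<le> seq_size s"
  shows "PP s (ps s x) < x \<and> x \<le> PP s (Suc (ps s x))"
proof -
  have ex: "\<exists>k. x \<le> PP s (Suc k)" using assms PP_ge[of s "Suc (length s)"] by (intro exI[of _ "length s"]) auto
  have a: "x \<le> PP s (Suc (ps s x))" unfolding ps_def by (rule LeastI_ex[OF ex])
  have b: "PP s (ps s x) < x"
  proof (cases "ps s x")
    case 0 then show ?thesis using assms by simp
  next
    case (Suc m)
    have "\<not> x \<le> PP s (Suc m)"
    proof
      assume "x \<le> PP s (Suc m)"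
      then have "ps s x \<le> m" unfolding ps_def by (rule Least_le)
      then show False using Suc by simp
    qed
    then show ?thesis using Suc by simp
  qed
  show ?thesis using a b by simp
qed

lemma ps_less: "1 \<le> v \<Longrightarrow> v \<le> PP s k \<Longrightarrow> ps s v < k"
proof -
  assume a: "1 \<le> v" "v \<le> PP s k"
  then have "k \<noteq> 0" by (cases k) auto
  then have "v \<le> PP s (Suc (k - 1))" using a by simp
  then have "ps s v \<le> k - 1" unfolding ps_def by (rule Least_le)
  then show ?thesis using \<open>k \<noteq> 0\<close> by simp
qed

lemma ps_gt: "1 \<le> v \<Longrightarrow> v \<le> seq_size s \<Longrightarrow> PP s (Suc k) < v \<Longrightarrow> k < ps s v"
proof -
  assume a: "1 \<le> v" "v \<le> seq_size s" "PP s (Suc k) < v"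
  show ?thesis
  proof (rule ccontr)
    assume "\<not> k < ps s v"
    then have "PP s (Suc (ps s v)) \<le> PP s (Suc k)" by (intro PP_mono) auto
    then show False using ps_props[OF a(1,2)] a(3) by auto
  qed
qed

lemma ps_mono_val: "1 \<le> u \<Longrightarrow> u \<le> seq_size s \<Longrightarrow> 1 \<le> v \<Longrightarrow> v \<le> seq_size s \<Longrightarrow> ps s u > ps s v \<Longrightarrow> u > v"
proof -
  assume a: "1 \<le> u" "u \<le> seq_size s" "1 \<le> v" "v \<le> seq_size s" "ps s u > ps s v"
  have "PP s (Suc (ps s v)) \<le> PP s (ps s u)" using a(5) by (intro PP_mono) auto
  then show ?thesis using ps_props[OF a(1,2)] ps_props[OF a(3,4)] by auto
qed

definition inv_at :: "op list \<Rightarrow> nat \<Rightarrow> bool" where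
  "inv_at s k \<longleftrightarrow> inpk s k = [Suc (PP s k)..<Suc (seq_size s)] \<and>
     length (wkk s k) = PP s k - QQ s k \<and> length (outk s k) = QQ s k \<and>
     distinct (wkk s k @ outk s k) \<and> set (wkk s k @ outk s k) = {1..PP s k} \<and>
     sorted_wrt (Rel s) (wkk s k)"

lemma step_push: "k < length s \<Longrightarrow> s ! k = Push a \<Longrightarrow>
   inpk s (Suc k) = drop a (inpk s k) \<and> wkk s (Suc k) = take a (inpk s k) @ wkk s k \<and> outk s (Suc k) = outk s k"
  using config_Suc[of k s] cfg_eq[of s k] cfg_eq[of s "Suc k"] by auto

lemma step_pop: "k < length s \<Longrightarrow> s ! k = Pop b \<Longrightarrow>
   inpk s (Suc k) = inpk s k \<and> wkk s (Suc k) = drop b (wkk s k) \<and> outk s (Suc k) = take b (wkk s k) @ outk s k"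
  using config_Suc[of k s] cfg_eq[of s k] cfg_eq[of s "Suc k"] by auto

lemma wf_Suc_QQ: "well_formed s \<Longrightarrow> QQ s k \<le> PP s k" by (rule wf_QQ_le)

lemma inv_all: assumes w: "well_formed s" shows "k \<le> length s \<Longrightarrow> inv_at s k"
proof (induction k)
  case 0
  show ?case using config_0[of s] cfg_eq[of s 0] unfolding inv_at_def by auto
next
  case (Suc k)
  then have kl: "k < length s" and IH: "inv_at s k" by auto
  define n where "n = seq_size s"
  define P where "P = PP s k"
  define Q where "Q = QQ s k"
  define wk where "wk = wkk s k"
  define out where "out = outk s k"
  have QP: "Q \<le> P" unfolding P_def Q_def using wf_QQ_le[OF w] .
  have I1: "inpk s k = [Suc P..<Suc n]" and I2: "length wk = P - Q" and I3: "length out = Q"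
    and I4: "distinct (wk @ out)" and I5: "set (wk @ out) = {1..P}" and I6: "sorted_wrt (Rel s) wk"
    using IH unfolding inv_at_def P_def Q_def n_def wk_def out_def by auto
  show ?case
  proof (cases "s ! k")
    case (Push a)
    have PS: "PP s (Suc k) = P + a" "QQ s (Suc k) = Q" using PP_Suc[OF kl] QQ_Suc[OF kl] Push
      unfolding P_def Q_def by auto
    have le: "P + a \<le> n" using PP_le[of s "Suc k"] PS unfolding n_def by simp
    have st: "inpk s (Suc k) = drop a (inpk s k)" "wkk s (Suc k) = take a (inpk s k) @ wk"
      "outk s (Suc k) = out" using step_push[OF kl Push] unfolding wk_def out_def by auto
    have tk: "take a (inpk s k) = [Suc P..<Suc P + a]" unfolding I1 by (rule take_upt) (use le in simp)
    have dr: "drop a (inpk s k) = [Suc (P + a)..<Suc n]" unfolding I1 by (simp only: drop_upt) simp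
    have sub: "set wk \<subseteq> {1..P}" "set out \<subseteq> {1..P}" using I5 by auto
    have blk: "\<And>x. x \<in> set [Suc P..<Suc P + a] \<Longrightarrow> ps s x = k"
      by (rule ps_eq) (auto simp: P_def[symmetric] PS)
    have old: "\<And>y. y \<in> set wk \<Longrightarrow> ps s y < k"
      using sub(1) by (intro ps_less) (auto simp: P_def)
    have s1: "sorted_wrt (Rel s) [Suc P..<Suc P + a]"
      by (rule sorted_wrt_mono_rel[of _ "(<)", OF _ sorted_wrt_upt]) (auto simp: blk Rel_def simp del: upt_Suc)
    have s2: "sorted_wrt (Rel s) ([Suc P..<Suc P + a] @ wk)"
      using s1 I6 blk old by (auto simp: sorted_wrt_append Rel_def)
    have d: "distinct ([Suc P..<Suc P + a] @ wk @ out)"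
      using I4 sub by auto
    have e: "set ([Suc P..<Suc P + a] @ wk @ out) = {1..P + a}"
      using I5 by auto
    show ?thesis unfolding inv_at_def using st tk dr PS I2 I3 QP d e s2 unfolding n_def by auto
  next
    case (Pop b)
    have PS: "PP s (Suc k) = P" "QQ s (Suc k) = Q + b" using PP_Suc[OF kl] QQ_Suc[OF kl] Pop
      unfolding P_def Q_def by auto
    have le: "Q + b \<le> P" using wf_QQ_le[OF w, of "Suc k"] PS by simp
    have st: "inpk s (Suc k) = inpk s k" "wkk s (Suc k) = drop b wk"
      "outk s (Suc k) = take b wk @ out" using step_pop[OF kl Pop] unfolding wk_def out_def by auto
    have d0: "distinct (take b wk @ drop b wk @ out)"
      using I4 append_take_drop_id[of b wk] by (simp only: append.assoc[symmetric])
    have dd: "distinct (drop b wk @ take b wk @ out)"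
      using d0 by (auto simp: distinct_append)
    have sw: "set wk = set (take b wk) \<union> set (drop b wk)"
      using append_take_drop_id[of b wk] set_append by metis
    have ee: "set (drop b wk @ take b wk @ out) = {1..P}"
      using I5 sw by auto
    show ?thesis unfolding inv_at_def using st PS I1 I2 I3 le dd ee I6 sorted_wrt_drop[OF I6, of b]
      unfolding n_def P_def Q_def by auto
  qed
qed



lemma invD: assumes "well_formed s" "k \<le> length s"
  shows "inpk s k = [Suc (PP s k)..<Suc (seq_size s)]" "length (wkk s k) = PP s k - QQ s k"
   "length (outk s k) = QQ s k" "distinct (wkk s k @ outk s k)" "set (wkk s k @ outk s k) = {1..PP s k}"
   "sorted_wrt (Rel s) (wkk s k)"
  using inv_all[OF assms] unfolding inv_at_def by auto

lemma in_wk_iff: assumes "well_formed s" "k \<le> length s"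
  shows "e \<in> set (wkk s k) \<longleftrightarrow> 1 \<le> e \<and> e \<le> PP s k \<and> e \<notin> set (outk s k)"
  using invD(4,5)[OF assms] by (auto simp: disjoint_iff)

lemma out_sub: assumes "well_formed s" "k \<le> length s" "e \<in> set (outk s k)"
  shows "1 \<le> e \<and> e \<le> PP s k"
  using invD(5)[OF assms(1,2)] assms(3) by auto

lemma out_suffix: assumes "well_formed s" shows "k \<le> k' \<Longrightarrow> k' \<le> length s \<Longrightarrow> \<exists>zs. outk s k' = zs @ outk s k"
proof (induction k')
  case 0 then show ?case by auto
next
  case (Suc k')
  show ?case
  proof (cases "k = Suc k'")
    case True then show ?thesis by auto
  next
    case False
    then have "k \<le> k'" "k' < length s" using Suc.prems by auto
    then obtain zs where zs: "outk s k' = zs @ outk s k" using Suc.IH by auto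
    show ?thesis
    proof (cases "s ! k'")
      case (Push a) then show ?thesis using step_push[OF \<open>k' < length s\<close> Push] zs by auto
    next
      case (Pop b) then show ?thesis using step_pop[OF \<open>k' < length s\<close> Pop] zs by auto
    qed
  qed
qed

lemma out_mono: "well_formed s \<Longrightarrow> k \<le> k' \<Longrightarrow> k' \<le> length s \<Longrightarrow> set (outk s k) \<subseteq> set (outk s k')"
  using out_suffix by fastforce

lemma perm_props: assumes w: "well_formed s"
  shows "length (result_perm s) = seq_size s" "distinct (result_perm s)" "set (result_perm s) = {1..seq_size s}"
proof -
  have r: "result_perm s = outk s (length s)" unfolding result_perm_def outk_def by simp
  have q: "QQ s (length s) = PP s (length s)" "PP s (length s) = seq_size s"
    using wf_QQ_len[OF w] PP_ge[of s "length s"] by auto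
  have l0: "length (wkk s (length s)) = 0" using invD(2)[OF w, of "length s"] q by simp
  show "length (result_perm s) = seq_size s" using invD(3)[OF w, of "length s"] q r by simp
  show "distinct (result_perm s)" using invD(4)[OF w, of "length s"] r by simp
  show "set (result_perm s) = {1..seq_size s}" using invD(5)[OF w, of "length s"] r q l0 by simp
qed

lemma out_drop: assumes w: "well_formed s" and k: "k \<le> length s"
  shows "outk s k = drop (seq_size s - QQ s k) (result_perm s)"
proof -
  have r: "result_perm s = outk s (length s)" unfolding result_perm_def outk_def by simp
  obtain zs where zs: "outk s (length s) = zs @ outk s k" using out_suffix[OF w k] by auto
  have "length (outk s k) = QQ s k" using invD(3)[OF w k] .
  moreover have "length (result_perm s) = seq_size s" using perm_props[OF w] by simp
  ultimately show ?thesis using zs r by simp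
qed

definition ix :: "nat list \<Rightarrow> nat \<Rightarrow> nat" where
  "ix xs e = (THE m. m < length xs \<and> xs ! m = e)"

lemma ix_nth: "distinct xs \<Longrightarrow> m < length xs \<Longrightarrow> ix xs (xs ! m) = m"
  unfolding ix_def by (rule the_equality) (auto simp: nth_eq_iff_index_eq)

lemma ix_props: "distinct xs \<Longrightarrow> e \<in> set xs \<Longrightarrow> ix xs e < length xs \<and> xs ! (ix xs e) = e"
  by (metis in_set_conv_nth ix_nth)

lemma in_drop_iff: assumes "distinct xs"
  shows "e \<in> set (drop d xs) \<longleftrightarrow> e \<in> set xs \<and> d \<le> ix xs e"
proof
  assume "e \<in> set (drop d xs)"
  then obtain m where m: "m < length (drop d xs)" "drop d xs ! m = e" by (auto simp: in_set_conv_nth)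
  then have "xs ! (d + m) = e" "d + m < length xs" by auto
  then show "e \<in> set xs \<and> d \<le> ix xs e" using ix_nth[OF assms] by (metis le_add1 nth_mem)
next
  assume a: "e \<in> set xs \<and> d \<le> ix xs e"
  then have "ix xs e < length xs" "xs ! ix xs e = e" using ix_props[OF assms] by auto
  then have "drop d xs ! (ix xs e - d) = e" "ix xs e - d < length (drop d xs)" using a by auto
  then show "e \<in> set (drop d xs)" by (metis nth_mem)
qed

lemma out_iff: assumes w: "well_formed s" and k: "k \<le> length s"
  shows "e \<in> set (outk s k) \<longleftrightarrow> 1 \<le> e \<and> e \<le> seq_size s \<and> seq_size s - QQ s k \<le> ix (result_perm s) e"
  using out_drop[OF w k] in_drop_iff[OF perm_props(2)[OF w]] perm_props(3)[OF w] by auto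

lemma pop_ix: assumes w: "well_formed s" and k: "k < length s" and p: "s ! k = Pop b" and m: "m < b"
  shows "m < length (wkk s k) \<and> ix (result_perm s) (wkk s k ! m) = seq_size s - QQ s (Suc k) + m"
proof -
  let ?n = "seq_size s" and ?pi = "result_perm s"
  have QS: "QQ s (Suc k) = QQ s k + b" using QQ_Suc[OF k] p by simp
  have le: "QQ s (Suc k) \<le> PP s (Suc k)" using wf_QQ_le[OF w] .
  have PS: "PP s (Suc k) = PP s k" using PP_Suc[OF k] p by simp
  have lw: "length (wkk s k) = PP s k - QQ s k" using invD(2)[OF w] k by simp
  have ml: "m < length (wkk s k)" using lw le QS PS m by simp
  have o: "take b (wkk s k) @ outk s k = drop (?n - QQ s (Suc k)) ?pi"
    using step_pop[OF k p] out_drop[OF w, of "Suc k"] k by simp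
  have "(take b (wkk s k) @ outk s k) ! m = wkk s k ! m" using ml m by (simp add: nth_append)
  then have e: "?pi ! (?n - QQ s (Suc k) + m) = wkk s k ! m"
  proof -
    have "drop (?n - QQ s (Suc k)) ?pi ! m = ?pi ! (?n - QQ s (Suc k) + m)"
      by (rule nth_drop) (simp add: perm_props(1)[OF w])
    then show ?thesis using o \<open>(take b (wkk s k) @ outk s k) ! m = wkk s k ! m\<close> by simp
  qed
  have "?n - QQ s (Suc k) + m < ?n" using le PP_le[of s "Suc k"] QS m by linarith
  then show ?thesis using ml e ix_nth[OF perm_props(2)[OF w]] perm_props(1)[OF w] by metis
qed

definition popped :: "op list \<Rightarrow> nat \<Rightarrow> nat \<Rightarrow> bool" where
  "popped s k e \<longleftrightarrow> k < length s \<and> e \<notin> set (outk s k) \<and> e \<in> set (outk s (Suc k))"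

definition pt :: "op list \<Rightarrow> nat \<Rightarrow> nat" where "pt s e = (THE k. popped s k e)"

lemma popped_pop: assumes "popped s k e"
  shows "\<exists>b. s ! k = Pop b \<and> e \<in> set (take b (wkk s k))"
proof (cases "s ! k")
  case (Push a) then show ?thesis using assms step_push[OF _ Push] unfolding popped_def by auto
next
  case (Pop b) then show ?thesis using assms step_pop[OF _ Pop] unfolding popped_def by auto
qed

lemma pop_popped: assumes w: "well_formed s" and k: "k < length s" and p: "s ! k = Pop b"
  and e: "e \<in> set (take b (wkk s k))" shows "popped s k e"
proof -
  have "e \<in> set (wkk s k)" using e by (meson in_set_takeD)
  then have "e \<notin> set (outk s k)" using invD(4)[OF w, of k] k by auto
  then show ?thesis unfolding popped_def using k step_pop[OF k p] e by auto
qed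

lemma popped_out_iff: assumes w: "well_formed s" and p: "popped s k e" and k': "k' \<le> length s"
  shows "e \<in> set (outk s k') \<longleftrightarrow> k < k'"
proof
  assume a: "e \<in> set (outk s k')"
  show "k < k'"
  proof (rule ccontr)
    assume "\<not> k < k'"
    then have "set (outk s k') \<subseteq> set (outk s k)" using out_mono[OF w] p unfolding popped_def by auto
    then show False using a p unfolding popped_def by auto
  qed
next
  assume "k < k'"
  then show "e \<in> set (outk s k')" using out_mono[OF w, of "Suc k" k'] k' p unfolding popped_def by auto
qed

lemma popped_unique: assumes w: "well_formed s" and "popped s k1 e" "popped s k2 e" shows "k1 = k2"
proof -
  have "k1 < Suc k2" using popped_out_iff[OF w assms(2), of "Suc k2"] assms(3) unfolding popped_def by auto
  moreover have "k2 < Suc k1" using popped_out_iff[OF w assms(3), of "Suc k1"] assms(2) unfolding popped_def by auto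
  ultimately show ?thesis by simp
qed

lemma first_change: "\<not> P (0::nat) \<Longrightarrow> P m \<Longrightarrow> \<exists>k<m. \<not> P k \<and> P (Suc k)"
proof (induction m)
  case 0 then show ?case by simp
next
  case (Suc m) show ?case
  proof (cases "P m")
    case True then obtain k where "k<m" "\<not> P k \<and> P (Suc k)" using Suc by auto
    then show ?thesis by (intro exI[of _ k]) auto
  next
    case False then show ?thesis using Suc by auto
  qed
qed

lemma popped_ex: assumes w: "well_formed s" and e: "1 \<le> e" "e \<le> seq_size s" shows "\<exists>k. popped s k e"
proof -
  have "e \<in> set (outk s (length s))" using perm_props(3)[OF w] e unfolding result_perm_def outk_def by simp
  moreover have "e \<notin> set (outk s 0)" using config_0[of s] unfolding outk_def by simp
  ultimately obtain k where "k < length s" "e \<notin> set (outk s k)" "e \<in> set (outk s (Suc k))"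
    using first_change[of "\<lambda>k. e \<in> set (outk s k)" "length s"] by auto
  then show ?thesis unfolding popped_def by auto
qed

lemma pt_popped: assumes w: "well_formed s" and e: "1 \<le> e" "e \<le> seq_size s" shows "popped s (pt s e) e"
proof -
  obtain k where k: "popped s k e" using popped_ex[OF w e] by auto
  show ?thesis unfolding pt_def by (rule theI[of _ k]) (use k popped_unique[OF w] in blast)+
qed

lemma pt_eq: "well_formed s \<Longrightarrow> popped s k e \<Longrightarrow> pt s e = k"
  unfolding pt_def by (rule the_equality) (auto dest: popped_unique)

lemma Rel_irrefl: "\<not> Rel s u u" unfolding Rel_def by auto
lemma Rel_asym: "Rel s u v \<Longrightarrow> \<not> Rel s v u" unfolding Rel_def by auto

lemma above: assumes w: "well_formed s" and k: "k < length s" and p: "s ! k = Pop b"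
  and v: "v \<in> set (take b (wkk s k))" and u: "u \<in> set (wkk s k)" and r: "Rel s u v"
  shows "u \<in> set (take b (wkk s k))"
proof -
  let ?w = "wkk s k"
  have so: "sorted_wrt (Rel s) ?w" using invD(6)[OF w] k by simp
  obtain iv where iv: "iv < b" "iv < length ?w" "?w ! iv = v" using v by (auto simp: in_set_conv_nth)
  obtain iu where iu: "iu < length ?w" "?w ! iu = u" using u by (auto simp: in_set_conv_nth)
  have "iu < iv"
  proof (rule ccontr)
    assume "\<not> iu < iv"
    then consider "iv < iu" | "iv = iu" by linarith
    then show False
    proof cases
      case 1 then have "Rel s v u" using so iu iv by (auto simp: sorted_wrt_iff_nth_less)
      then show False using r Rel_asym by blast
    next
      case 2 then show False using r iu iv Rel_irrefl by metis
    qed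
  qed
  then show ?thesis using iu iv by (metis in_set_conv_nth length_take min_less_iff_conj nth_take order.strict_trans)
qed

lemma same_pop_order: assumes w: "well_formed s" and k: "k < length s" and p: "s ! k = Pop b"
  and v: "v \<in> set (take b (wkk s k))" and u: "u \<in> set (take b (wkk s k))" and r: "Rel s u v"
  shows "ix (result_perm s) u < ix (result_perm s) v"
proof -
  let ?w = "wkk s k"
  have so: "sorted_wrt (Rel s) ?w" using invD(6)[OF w] k by simp
  obtain iv where iv: "iv < b" "iv < length ?w" "?w ! iv = v" using v by (auto simp: in_set_conv_nth)
  obtain iu where iu: "iu < b" "iu < length ?w" "?w ! iu = u" using u by (auto simp: in_set_conv_nth)
  have "iu < iv"
  proof (rule ccontr)
    assume "\<not> iu < iv"
    then consider "iv < iu" | "iv = iu" by linarith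
    then show False
    proof cases
      case 1 then have "Rel s v u" using so iu iv by (auto simp: sorted_wrt_iff_nth_less)
      then show False using r Rel_asym by blast
    next
      case 2 then show False using r iu iv Rel_irrefl by metis
    qed
  qed
  then show ?thesis using pop_ix[OF w k p iu(1)] pop_ix[OF w k p iv(1)] iu iv by simp
qed

lemma popped_le_PP: assumes w: "well_formed s" and p: "popped s k e" shows "1 \<le> e \<and> e \<le> PP s k"
proof -
  obtain b where "s ! k = Pop b" "e \<in> set (take b (wkk s k))" using popped_pop[OF p] by auto
  then have "e \<in> set (wkk s k)" by (meson in_set_takeD)
  then show ?thesis using in_wk_iff[OF w, of k] p unfolding popped_def by auto
qed

lemma pt_after: assumes w: "well_formed s" and p: "popped s k e" and e: "PP s i < e" shows "i < k"
proof (rule ccontr)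
  assume "\<not> i < k"
  then have "PP s k \<le> PP s i" by (intro PP_mono) auto
  then show False using popped_le_PP[OF w p] e by auto
qed

lemma blk_ps: assumes i: "i < length s" and pa: "s ! i = Push a" and e: "PP s i < e" "e \<le> PP s i + a"
  shows "ps s e = i"
  by (rule ps_eq) (use e PP_Suc[OF i] pa in auto)

lemma blk_range: assumes i: "i < length s" and pa: "s ! i = Push a" and e: "PP s i < e" "e \<le> PP s i + a"
  shows "1 \<le> e \<and> e \<le> seq_size s"
  using PP_le[of s "Suc i"] PP_Suc[OF i] pa e by auto

lemma blk_mono1: assumes w: "well_formed s" and i: "i < length s" and pa: "s ! i = Push a"
  and z: "PP s i < z" "Suc z \<le> PP s i + a"
  shows "pt s z \<le> pt s (Suc z)"
proof (rule ccontr)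
  assume c: "\<not> pt s z \<le> pt s (Suc z)"
  let ?k = "pt s (Suc z)"
  have r1: "1 \<le> z \<and> z \<le> seq_size s" using blk_range[OF i pa] z by auto
  have r2: "1 \<le> Suc z \<and> Suc z \<le> seq_size s" using blk_range[OF i pa] z by auto
  have pk: "popped s ?k (Suc z)" using pt_popped[OF w] r2 by auto
  have pz: "popped s (pt s z) z" using pt_popped[OF w] r1 by auto
  have ik: "i < ?k" using pt_after[OF w pk] z by auto
  have kl: "?k < length s" using pk unfolding popped_def by auto
  obtain b where b: "s ! ?k = Pop b" "Suc z \<in> set (take b (wkk s ?k))" using popped_pop[OF pk] by auto
  have "z \<notin> set (outk s ?k)" using popped_out_iff[OF w pz, of ?k] c kl by auto
  moreover have "z \<le> PP s ?k" using PP_mono[of "Suc i" ?k s] ik PP_Suc[OF i] pa z by auto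
  ultimately have zw: "z \<in> set (wkk s ?k)" using in_wk_iff[OF w, of ?k] kl r1 by auto
  have "Rel s z (Suc z)" unfolding Rel_def using blk_ps[OF i pa, of z] blk_ps[OF i pa, of "Suc z"] z by auto
  then have "z \<in> set (take b (wkk s ?k))" using above[OF w kl b(1) b(2) zw] by auto
  then have "popped s ?k z" using pop_popped[OF w kl b(1)] by auto
  then have "pt s z = ?k" using pt_eq[OF w] by auto
  then show False using c by auto
qed

lemma blk_same_iff: assumes w: "well_formed s" and i: "i < length s" and pa: "s ! i = Push a"
  and z: "PP s i < z" "Suc z \<le> PP s i + a"
  shows "pt s z = pt s (Suc z) \<longleftrightarrow> ix (result_perm s) z < ix (result_perm s) (Suc z)"
proof -
  have r1: "1 \<le> z \<and> z \<le> seq_size s" using blk_range[OF i pa] z by auto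
  have r2: "1 \<le> Suc z \<and> Suc z \<le> seq_size s" using blk_range[OF i pa] z by auto
  have pk: "popped s (pt s (Suc z)) (Suc z)" using pt_popped[OF w] r2 by auto
  have pz: "popped s (pt s z) z" using pt_popped[OF w] r1 by auto
  have R: "Rel s z (Suc z)" unfolding Rel_def using blk_ps[OF i pa, of z] blk_ps[OF i pa, of "Suc z"] z by auto
  show ?thesis
  proof
    assume eq: "pt s z = pt s (Suc z)"
    obtain b where b: "s ! pt s z = Pop b" "z \<in> set (take b (wkk s (pt s z)))" using popped_pop[OF pz] by auto
    obtain b' where b': "s ! pt s z = Pop b'" "Suc z \<in> set (take b' (wkk s (pt s z)))"
      using popped_pop[OF pk] eq by auto
    have kl: "pt s z < length s" using pz unfolding popped_def by auto
    show "ix (result_perm s) z < ix (result_perm s) (Suc z)"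
      using same_pop_order[OF w kl b(1) _ b(2) R] b' b by auto
  next
    assume lt: "ix (result_perm s) z < ix (result_perm s) (Suc z)"
    show "pt s z = pt s (Suc z)"
    proof (rule ccontr)
      assume ne: "pt s z \<noteq> pt s (Suc z)"
      then have lt2: "pt s z < pt s (Suc z)" using blk_mono1[OF w i pa z] by auto
      let ?k = "Suc (pt s z)"
      have kl: "?k \<le> length s" using pz unfolding popped_def by auto
      have "z \<in> set (outk s ?k)" using pz unfolding popped_def by auto
      then have a1: "seq_size s - QQ s ?k \<le> ix (result_perm s) z" using out_iff[OF w kl] by auto
      have "Suc z \<notin> set (outk s ?k)" using popped_out_iff[OF w pk kl] lt2 by auto
      then have a2: "\<not> seq_size s - QQ s ?k \<le> ix (result_perm s) (Suc z)" using out_iff[OF w kl] r2 by auto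
      show False using a1 a2 lt by auto
    qed
  qed
qed

lemma blk_mono: assumes w: "well_formed s" and i: "i < length s" and pa: "s ! i = Push a"
  and x: "PP s i < x" shows "x \<le> y \<Longrightarrow> y \<le> PP s i + a \<Longrightarrow> pt s x \<le> pt s y"
proof (induction y)
  case 0 then show ?case using x by auto
next
  case (Suc y)
  show ?case
  proof (cases "x = Suc y")
    case False
    then have "x \<le> y" using Suc by auto
    then show ?thesis using Suc.IH Suc.prems blk_mono1[OF w i pa, of y] x by force
  qed simp
qed

lemma blk_eq_iff: assumes w: "well_formed s" and i: "i < length s" and pa: "s ! i = Push a"
  and x: "PP s i < x" shows "x \<le> y \<Longrightarrow> y \<le> PP s i + a \<Longrightarrow>
    (pt s x = pt s y \<longleftrightarrow> (\<forall>z. x \<le> z \<and> z < y \<longrightarrow> ix (result_perm s) z < ix (result_perm s) (Suc z)))"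
proof (induction y)
  case 0 then show ?case using x by auto
next
  case (Suc y)
  show ?case
  proof (cases "x = Suc y")
    case False
    then have xy: "x \<le> y" using Suc by auto
    have m1: "pt s x \<le> pt s y" using blk_mono[OF w i pa x xy] Suc.prems by auto
    have m2: "pt s y \<le> pt s (Suc y)" using blk_mono1[OF w i pa, of y] x xy Suc.prems by auto
    have sy: "pt s y = pt s (Suc y) \<longleftrightarrow> ix (result_perm s) y < ix (result_perm s) (Suc y)"
      using blk_same_iff[OF w i pa, of y] x xy Suc.prems by auto
    have ih: "pt s x = pt s y \<longleftrightarrow> (\<forall>z. x \<le> z \<and> z < y \<longrightarrow> ix (result_perm s) z < ix (result_perm s) (Suc z))"
      using Suc.IH xy Suc.prems by auto
    show ?thesis
    proof
      assume "pt s x = pt s (Suc y)"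
      then have "pt s x = pt s y" "pt s y = pt s (Suc y)" using m1 m2 by auto
      then show "\<forall>z. x \<le> z \<and> z < Suc y \<longrightarrow> ix (result_perm s) z < ix (result_perm s) (Suc z)"
        using ih sy by (metis less_Suc_eq)
    next
      assume "\<forall>z. x \<le> z \<and> z < Suc y \<longrightarrow> ix (result_perm s) z < ix (result_perm s) (Suc z)"
      then have "pt s x = pt s y" "pt s y = pt s (Suc y)" using ih sy xy by auto
      then show "pt s x = pt s (Suc y)" by simp
    qed
  qed simp
qed

lemma Rel_total: "u \<noteq> v \<Longrightarrow> Rel s u v \<or> Rel s v u"
  unfolding Rel_def by auto

lemma popped_ix_iff: assumes w: "well_formed s" and k: "k < length s" and e: "1 \<le> e" "e \<le> seq_size s"
  shows "popped s k e \<longleftrightarrow> seq_size s - QQ s (Suc k) \<le> ix (result_perm s) e \<and> ix (result_perm s) e < seq_size s - QQ s k"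
  using out_iff[OF w, of k] out_iff[OF w, of "Suc k"] k e unfolding popped_def by auto

lemma pop_order_rev: assumes w: "well_formed s" and pu: "popped s k u" and pv: "popped s k v"
  and lt: "ix (result_perm s) u < ix (result_perm s) v" shows "Rel s u v"
proof -
  have "u \<noteq> v" using lt by auto
  moreover have "\<not> Rel s v u"
  proof
    assume r: "Rel s v u"
    obtain b where b: "s ! k = Pop b" "u \<in> set (take b (wkk s k))" using popped_pop[OF pu] by auto
    obtain b' where b': "s ! k = Pop b'" "v \<in> set (take b' (wkk s k))" using popped_pop[OF pv] by auto
    have kl: "k < length s" using pu unfolding popped_def by auto
    have "ix (result_perm s) v < ix (result_perm s) u" using same_pop_order[OF w kl b(1) b(2) _ r] b b' by auto
    then show False using lt by auto
  qed
  ultimately show ?thesis using Rel_total by blast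
qed

lemma pt_props: assumes w: "well_formed s" and e: "1 \<le> e" "e \<le> seq_size s"
  shows "pt s e < length s \<and> seq_size s - QQ s (Suc (pt s e)) \<le> ix (result_perm s) e \<and> ix (result_perm s) e < seq_size s - QQ s (pt s e)"
proof -
  have p: "popped s (pt s e) e" using pt_popped[OF w e] .
  then have "pt s e < length s" unfolding popped_def by auto
  then show ?thesis using popped_ix_iff[OF w _ e] p by auto
qed

definition twoseq :: "op list \<Rightarrow> op list \<Rightarrow> nat \<Rightarrow> nat \<Rightarrow> nat \<Rightarrow> bool" where
  "twoseq s t i i' a \<longleftrightarrow> well_formed s \<and> well_formed t \<and> reduced s \<and> reduced t \<and>
    seq_size s = seq_size t \<and> result_perm s = result_perm t \<and> i < length s \<and> s ! i = Push a \<and>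
    i' < length t \<and> t ! i' = Push a \<and> PP s i = PP t i' \<and> QQ s i = QQ t i'"

lemma twoseq_sym: "twoseq s t i i' a \<Longrightarrow> twoseq t s i' i a"
  unfolding twoseq_def by auto

lemma chunk_cross: assumes S: "twoseq s t i i' a"
  and x: "PP s i < x" "x \<le> PP s i + a" and y: "PP s i < y" "y \<le> PP s i + a"
  shows "pt s x = pt s y \<longleftrightarrow> pt t x = pt t y"
proof -
  have w: "well_formed s" "well_formed t" and i: "i < length s" "s ! i = Push a" "i' < length t" "t ! i' = Push a"
    and pp: "PP s i = PP t i'" and pi: "result_perm s = result_perm t" using S unfolding twoseq_def by auto
  have gen: "pt s u = pt s v \<longleftrightarrow> pt t u = pt t v" if "PP s i < u" "u \<le> v" "v \<le> PP s i + a" for u v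
    using blk_eq_iff[OF w(1) i(1,2), of u v] blk_eq_iff[OF w(2) i(3,4), of u v] that pp pi by auto
  show ?thesis
  proof (cases "x \<le> y")
    case True then show ?thesis using gen[of x y] x y by auto
  next
    case False then show ?thesis using gen[of y x] x y by auto
  qed
qed

lemma QQ_le_n: "well_formed s \<Longrightarrow> QQ s k \<le> seq_size s"
  using wf_QQ_le PP_le le_trans by blast

lemma stepW: assumes S: "twoseq s t i i' a" and x: "PP s i < x" "x \<le> PP s i + a"
  shows "QQ t (pt t x) \<le> QQ s (pt s x)"
proof (rule ccontr)
  assume c: "\<not> QQ t (pt t x) \<le> QQ s (pt s x)"
  have w1: "well_formed s" and w2: "well_formed t" and i1: "i < length s" "s ! i = Push a"
    and i2: "i' < length t" "t ! i' = Push a" and pp: "PP s i = PP t i'" and qq: "QQ s i = QQ t i'"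
    and nn: "seq_size t = seq_size s" and pi: "result_perm t = result_perm s"
    using S unfolding twoseq_def by auto
  define n where "n = seq_size s"
  define \<pi> where "\<pi> = result_perm s"
  define j where "j = pt s x"
  define j' where "j' = pt t x"
  have xr: "1 \<le> x" "x \<le> n" using blk_range[OF i1 x] n_def by auto
  have x': "PP t i' < x" "x \<le> PP t i' + a" using x pp by auto
  have pj: "popped s j x" using pt_popped[OF w1] xr unfolding j_def n_def by auto
  have pj': "popped t j' x" using pt_popped[OF w2] xr nn unfolding j'_def n_def by auto
  have ij: "i < j" using pt_after[OF w1 pj x(1)] .
  have ij': "i' < j'" using pt_after[OF w2 pj' x'(1)] .
  have jl: "j < length s" using pj unfolding popped_def by auto
  have jl': "j' < length t" using pj' unfolding popped_def by auto
  have ixx: "ix \<pi> x < n - QQ t j'" using popped_ix_iff[OF w2 jl', of x] pj' xr nn pi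
    unfolding n_def \<pi>_def by auto
  have qn: "QQ t j' \<le> n" using QQ_le_n[OF w2] nn n_def by auto
  have c': "QQ s j < QQ t j'" using c unfolding j_def j'_def by auto
  define m where "m = n - QQ t j'"
  have mn: "m < n" using c' qn m_def by auto
  have lp: "length \<pi> = n" "distinct \<pi>" "set \<pi> = {1..n}" using perm_props[OF w1] unfolding n_def \<pi>_def by auto
  define wv where "wv = \<pi> ! m"
  have ixw: "ix \<pi> wv = m" using ix_nth[OF lp(2)] mn lp(1) unfolding wv_def by auto
  have wr: "1 \<le> wv" "wv \<le> n" using lp mn unfolding wv_def by (auto dest!: nth_mem[of m \<pi>])
  have pw: "popped s j wv" using popped_ix_iff[OF w1 jl, of wv] wr ixw ixx mn c' qn pj popped_ix_iff[OF w1 jl, of x] xr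
    unfolding n_def \<pi>_def m_def by auto
  have R: "Rel s x wv" using pop_order_rev[OF w1 pj pw] ixx ixw m_def \<pi>_def by auto
  have psx: "ps s x = i" using blk_ps[OF i1 x] .
  have wpp: "PP s (ps s wv) < wv \<and> wv \<le> PP s (Suc (ps s wv))" using ps_props[of wv s] wr n_def by auto
  show False
  proof (cases "ps s wv = i")
    case True
    then have wB: "PP s i < wv" "wv \<le> PP s i + a" using wpp PP_Suc[OF i1(1)] i1(2) by auto
    have "pt s wv = pt s x" using pt_eq[OF w1 pw] j_def by auto
    then have "pt t wv = j'" using chunk_cross[OF S wB x] j'_def by auto
    then have "ix \<pi> wv < n - QQ t j'" using pt_props[OF w2, of wv] wr nn pi unfolding n_def \<pi>_def by auto
    then show False using ixw m_def by auto
  next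
    case False
    then have lt: "ps s wv < i" using R psx unfolding Rel_def by auto
    then have wle: "wv \<le> PP s i" using wpp PP_mono[of "Suc (ps s wv)" i s] by auto
    have "wv \<notin> set (outk s i)" using popped_out_iff[OF w1 pw, of i] i1 ij by auto
    then have "ix \<pi> wv < n - QQ t i'" using out_iff[OF w1, of i] i1 wr qq unfolding n_def \<pi>_def by auto
    then have nout: "wv \<notin> set (outk t i')" using out_iff[OF w2, of i'] i2 nn pi unfolding n_def \<pi>_def by auto
    define kw where "kw = pt t wv"
    have pkw: "popped t kw wv" using pt_popped[OF w2, of wv] wr nn unfolding kw_def n_def by auto
    have "wv \<in> set (outk t j')" using out_iff[OF w2, of j'] jl' wr nn pi ixw m_def unfolding n_def \<pi>_def by auto
    then have kj: "kw < j'" using popped_out_iff[OF w2 pkw, of j'] jl' by auto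
    have "\<not> kw < i'" using popped_out_iff[OF w2 pkw, of i'] i2 nout by auto
    moreover have "kw \<noteq> i'" using popped_pop[OF pkw] i2 by auto
    ultimately have ik: "i' < kw" by auto
    have kl: "kw < length t" using pkw unfolding popped_def by auto
    have "x \<le> PP t kw" using x' PP_Suc[OF i2(1)] i2(2) PP_mono[of "Suc i'" kw t] ik by auto
    moreover have "x \<notin> set (outk t kw)" using popped_out_iff[OF w2 pj', of kw] kl kj by auto
    ultimately have xw: "x \<in> set (wkk t kw)" using in_wk_iff[OF w2, of kw] kl xr by auto
    have "ps t x = i'" using blk_ps[OF i2 x'] .
    moreover have "ps t wv < i'" using ps_less[of wv t i'] wr wle pp by auto
    ultimately have Rt: "Rel t x wv" unfolding Rel_def by auto
    obtain b where b: "t ! kw = Pop b" "wv \<in> set (take b (wkk t kw))" using popped_pop[OF pkw] by auto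
    have "x \<in> set (take b (wkk t kw))" using above[OF w2 kl b xw Rt] .
    then have "popped t kw x" using pop_popped[OF w2 kl b(1)] by auto
    then have "kw = j'" using popped_unique[OF w2 _ pj'] by auto
    then show False using kj by auto
  qed
qed

lemma reducedD: "reduced s \<Longrightarrow> Suc k < length s \<Longrightarrow> is_push (s ! k) \<Longrightarrow> is_pop (s ! Suc k) \<Longrightarrow>
    s ! k = Push 1 \<and> s ! Suc k = Pop 1"
  unfolding reduced_def by blast

lemma is_push_iff: "is_push x \<longleftrightarrow> (\<exists>a. x = Push a)" by (cases x) auto
lemma is_pop_iff: "is_pop x \<longleftrightarrow> (\<exists>a. x = Pop a)" by (cases x) auto

lemma take1_single: "e \<in> set (take (Suc 0) xs) \<Longrightarrow> e' \<in> set (take (Suc 0) xs) \<Longrightarrow> e = e'"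
  by (cases xs) auto

lemma stepA: assumes S: "twoseq s t i i' a" and x: "PP s i < x" "x \<le> PP s i + a"
  and qe: "QQ s (pt s x) = QQ t (pt t x)"
  shows "QQ s (Suc (pt s x)) \<le> QQ t (Suc (pt t x))"
proof (rule ccontr)
  assume c: "\<not> QQ s (Suc (pt s x)) \<le> QQ t (Suc (pt t x))"
  have w1: "well_formed s" and w2: "well_formed t" and i1: "i < length s" "s ! i = Push a"
    and i2: "i' < length t" "t ! i' = Push a" and pp: "PP s i = PP t i'" and qq: "QQ s i = QQ t i'"
    and nn: "seq_size t = seq_size s" and pi: "result_perm t = result_perm s" and rs: "reduced s"
    using S unfolding twoseq_def by auto
  define n where "n = seq_size s"
  define \<pi> where "\<pi> = result_perm s"
  define j where "j = pt s x"
  define j' where "j' = pt t x"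
  have xr: "1 \<le> x" "x \<le> n" using blk_range[OF i1 x] n_def by auto
  have x': "PP t i' < x" "x \<le> PP t i' + a" using x pp by auto
  have pj: "popped s j x" using pt_popped[OF w1] xr unfolding j_def n_def by auto
  have pj': "popped t j' x" using pt_popped[OF w2] xr nn unfolding j'_def n_def by auto
  have ij: "i < j" using pt_after[OF w1 pj x(1)] .
  have ij': "i' < j'" using pt_after[OF w2 pj' x'(1)] .
  have jl: "j < length s" using pj unfolding popped_def by auto
  have jl': "j' < length t" using pj' unfolding popped_def by auto
  have ixx: "n - QQ t (Suc j') \<le> ix \<pi> x" "ix \<pi> x < n - QQ t j'" using popped_ix_iff[OF w2 jl', of x] pj' xr nn pi
    unfolding n_def \<pi>_def by auto
  have qn: "QQ t (Suc j') \<le> n" "QQ s (Suc j) \<le> n" using QQ_le_n[OF w2] QQ_le_n[OF w1] nn n_def by auto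
  have c': "QQ t (Suc j') < QQ s (Suc j)" using c unfolding j_def j'_def by auto
  have qe': "QQ s j = QQ t j'" using qe j_def j'_def by auto
  define m where "m = n - QQ t (Suc j') - 1"
  have m1: "n - QQ s (Suc j) \<le> m" "m < n - QQ t (Suc j')" using c' qn unfolding m_def by auto
  have mx: "m < ix \<pi> x" using m1 ixx by auto
  have lp: "length \<pi> = n" "distinct \<pi>" "set \<pi> = {1..n}" using perm_props[OF w1] unfolding n_def \<pi>_def by auto
  have mn: "m < n" using mx ixx qn by auto
  define y where "y = \<pi> ! m"
  have ixy: "ix \<pi> y = m" using ix_nth[OF lp(2)] mn lp(1) unfolding y_def by auto
  have yr: "1 \<le> y" "y \<le> n" using lp mn unfolding y_def by (auto dest!: nth_mem[of m \<pi>])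
  have py: "popped s j y" using popped_ix_iff[OF w1 jl, of y] yr ixy m1 mx ixx qe'
    unfolding n_def \<pi>_def by auto
  have R: "Rel s y x" using pop_order_rev[OF w1 py pj] ixy mx \<pi>_def by auto
  have psx: "ps s x = i" using blk_ps[OF i1 x] .
  have ypp: "PP s (ps s y) < y \<and> y \<le> PP s (Suc (ps s y))" using ps_props[of y s] yr n_def by auto
  have npy: "\<not> popped t j' y" using popped_ix_iff[OF w2 jl', of y] yr nn pi ixy m1 unfolding n_def \<pi>_def by auto
  have "ps s y \<noteq> i"
  proof
    assume True: "ps s y = i"
    then have yB: "PP s i < y" "y \<le> PP s i + a" using ypp PP_Suc[OF i1(1)] i1(2) by auto
    have "pt s y = pt s x" using pt_eq[OF w1 py] j_def by auto
    then have "pt t y = j'" using chunk_cross[OF S yB x] j'_def by auto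
    then show False using npy pt_popped[OF w2, of y] yr nn n_def by auto
  qed
  then have gi: "i < ps s y" using R psx unfolding Rel_def by auto
  then have yb: "PP s i + a < y" using ypp PP_mono[of "Suc i" "ps s y" s] PP_Suc[OF i1(1)] i1(2) by auto
  have ny1: "y \<notin> set (outk t (Suc j'))" using out_iff[OF w2, of "Suc j'"] jl' nn pi ixy m1 unfolding n_def \<pi>_def by auto
  have ny0: "y \<notin> set (outk t j')" using ny1 out_mono[OF w2, of j' "Suc j'"] jl' by auto
  have yP: "PP t j' < y"
  proof (rule ccontr)
    assume "\<not> PP t j' < y"
    then have yw: "y \<in> set (wkk t j')" using in_wk_iff[OF w2, of j'] jl' ny0 yr by auto
    have "ps t y > i'" using ps_gt[of y t i'] yr nn n_def yb pp PP_Suc[OF i2(1)] i2(2) by auto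
    moreover have "ps t x = i'" using blk_ps[OF i2 x'] .
    ultimately have "Rel t y x" unfolding Rel_def by auto
    moreover obtain b where b: "t ! j' = Pop b" "x \<in> set (take b (wkk t j'))" using popped_pop[OF pj'] by auto
    ultimately have "y \<in> set (take b (wkk t j'))" using above[OF w2 jl' b(1) b(2) yw] by auto
    then have "popped t j' y" using pop_popped[OF w2 jl' b(1)] by auto
    then show False using npy by auto
  qed
  define j0 where "j0 = j - 1"
  have jj0: "j = Suc j0" using ij j0_def by auto
  have j0l: "j0 < length s" using jj0 jl by auto
  have xy: "x \<noteq> y" using R psx gi unfolding Rel_def by auto
  obtain b where b: "s ! j = Pop b" "x \<in> set (take b (wkk s j))" using popped_pop[OF pj] by auto
  obtain b0 where b0: "s ! j0 = Pop b0"
  proof (cases "s ! j0")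
    case (Push c)
    then have "s ! j0 = Push 1 \<and> s ! j = Pop 1" using reducedD[OF rs, of j0] jj0 jl b(1) by auto
    then have "b = 1" using b by auto
    moreover obtain b' where "s ! j = Pop b'" "y \<in> set (take b' (wkk s j))" using popped_pop[OF py] by auto
    ultimately show ?thesis using take1_single[of x "wkk s j" y] b xy by auto
  qed
  have b0p: "b0 \<ge> 1" using wf_amt[OF w1 j0l] b0 by auto
  have QS0: "QQ s j = QQ s j0 + b0" using QQ_Suc[OF j0l] b0 jj0 by auto
  have PS0: "PP s j = PP s j0" using PP_Suc[OF j0l] b0 jj0 by auto
  have lw0: "length (wkk s j0) = PP s j0 - QQ s j0" using invD(2)[OF w1] j0l by auto
  have "QQ s j \<le> PP s j" using wf_QQ_le[OF w1] .
  then have lw0b: "b0 \<le> length (wkk s j0)" using lw0 QS0 PS0 by auto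
  define e1 where "e1 = wkk s j0 ! 0"
  have l0: "0 < length (take b0 (wkk s j0))" using lw0b b0p by auto
  have "take b0 (wkk s j0) ! 0 = e1" using b0p unfolding e1_def by simp
  then have e1t: "e1 \<in> set (take b0 (wkk s j0))" using nth_mem[OF l0] by simp
  have pe1: "popped s j0 e1" using pop_popped[OF w1 j0l b0 e1t] .
  have e1r: "1 \<le> e1 \<and> e1 \<le> PP s j0" using popped_le_PP[OF w1 pe1] .
  have "e1 \<in> set (outk s j)" using pe1 jj0 unfolding popped_def by auto
  then have "n - QQ t j' \<le> ix \<pi> e1" using out_iff[OF w1, of j] jl qe' unfolding n_def \<pi>_def by auto
  then have "e1 \<in> set (outk t j')" using out_iff[OF w2, of j'] jl' nn pi e1r PP_le[of s j0] unfolding n_def \<pi>_def by auto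
  then have e1y: "e1 < y" using out_sub[OF w2, of j'] jl' yP by fastforce
  have "y \<notin> set (outk s j)" using py unfolding popped_def by auto
  then have "y \<notin> set (outk s j0)" using out_mono[OF w1, of j0 j] jj0 jl by auto
  moreover have "y \<le> PP s j0" using popped_le_PP[OF w1 py] PS0 by auto
  ultimately have yw0: "y \<in> set (wkk s j0)" using in_wk_iff[OF w1, of j0] j0l yr by auto
  have Re: "Rel s e1 y"
  proof -
    obtain iy where iy: "iy < length (wkk s j0)" "wkk s j0 ! iy = y" using yw0 by (auto simp: in_set_conv_nth)
    have "iy \<noteq> 0" using iy e1y e1_def by (metis less_irrefl)
    then show ?thesis using invD(6)[OF w1, of j0] j0l iy e1_def by (auto simp: sorted_wrt_iff_nth_less)
  qed
  define d where "d = ps s y"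
  have "\<not> ps s e1 > ps s y" using ps_mono_val[of e1 s y] e1r yr e1y PP_le[of s j0] n_def by auto
  then have pse: "ps s e1 = d" using Re unfolding Rel_def d_def by auto
  have dpp: "PP s d < e1" "y \<le> PP s (Suc d)" using ps_props[of e1 s] ps_props[of y s] e1r yr pse d_def
    PP_le[of s j0] n_def by auto
  have dl: "d < length s"
  proof (rule ccontr)
    assume "\<not> d < length s"
    then have "PP s d = PP s (Suc d)" using PP_ge[of s d] PP_ge[of s "Suc d"] by auto
    then show False using dpp e1y by auto
  qed
  obtain ad where ad: "s ! d = Push ad" "ad \<ge> 2"
  proof (cases "s ! d")
    case (Push c)
    then have "PP s (Suc d) = PP s d + c" using PP_Suc[OF dl] by auto
    then show ?thesis using that Push dpp e1y by auto
  next
    case (Pop c)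
    then have "PP s (Suc d) = PP s d" using PP_Suc[OF dl] by auto
    then show ?thesis using dpp e1y by auto
  qed
  have dj0: "d < j0"
  proof (rule ccontr)
    assume "\<not> d < j0"
    then have "PP s j0 \<le> PP s d" using PP_mono by auto
    then show False using dpp e1r by auto
  qed
  define f where "f = (LEAST k. d < k \<and> k < length s \<and> is_pop (s ! k))"
  have fex: "d < j0 \<and> j0 < length s \<and> is_pop (s ! j0)" using dj0 j0l b0 by auto
  have fP: "d < f \<and> f < length s \<and> is_pop (s ! f)" unfolding f_def by (rule LeastI[of _ j0]) (rule fex)
  have fle: "f \<le> j0" unfolding f_def by (rule Least_le) (rule fex)
  have fd: "f \<noteq> Suc d"
  proof
    assume "f = Suc d"
    then have "s ! d = Push 1" using reducedD[OF rs, of d] fP ad by auto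
    then show False using ad by auto
  qed
  define g where "g = f - 1"
  have fg: "f = Suc g" "d < g" using fP fd g_def by auto
  have gl: "g < length s" using fg fP by auto
  have "\<not> is_pop (s ! g)"
  proof
    assume "is_pop (s ! g)"
    then have "f \<le> g" unfolding f_def by (intro Least_le) (use fg gl in auto)
    then show False using fg by auto
  qed
  then have "is_push (s ! g)" by (cases "s ! g") auto
  then have sg: "s ! g = Push 1" "s ! f = Pop 1" using reducedD[OF rs, of g] fg fP by auto
  have PSg: "PP s f = PP s g + 1" using PP_Suc[OF gl] sg fg by auto
  have "PP s f \<le> seq_size s" using PP_le .
  then have "[Suc (PP s g)..<Suc (seq_size s)] = Suc (PP s g) # [Suc (Suc (PP s g))..<Suc (seq_size s)]"
    using PSg by (intro upt_conv_Cons) auto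
  then have inpg: "take 1 (inpk s g) = [Suc (PP s g)]" using invD(1)[OF w1, of g] gl by simp
  have wf: "wkk s f = Suc (PP s g) # wkk s g" using step_push[OF gl sg(1)] fg inpg by auto
  have fl: "f < length s" using fP by auto
  have pe2: "popped s f (Suc (PP s g))" using pop_popped[OF w1 fl sg(2)] wf by auto
  have "PP s (Suc d) \<le> PP s g" using PP_mono fg by auto
  then have e2y: "y < Suc (PP s g)" using dpp by auto
  have fj0: "f \<noteq> j0"
  proof
    assume "f = j0"
    then have "e1 = Suc (PP s g)" using wf e1_def by auto
    then show False using e1y e2y by auto
  qed
  then have "Suc f \<le> j" using fle jj0 by auto
  then have "Suc (PP s g) \<in> set (outk s j)" using out_mono[OF w1, of "Suc f" j] jl pe2 unfolding popped_def by auto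
  then have "n - QQ t j' \<le> ix \<pi> (Suc (PP s g))" using out_iff[OF w1, of j] jl qe' unfolding n_def \<pi>_def by auto
  then have "Suc (PP s g) \<in> set (outk t j')" using out_iff[OF w2, of j'] jl' nn pi PSg PP_le[of s f] unfolding n_def \<pi>_def by auto
  then have "Suc (PP s g) \<le> PP t j'" using out_sub[OF w2, of j'] jl' by auto
  then show False using yP e2y by auto
qed

lemma stepP: assumes S: "twoseq s t i i' a" and x: "PP s i < x" "x \<le> PP s i + a"
  and qe: "QQ s (pt s x) = QQ t (pt t x)" and qe2: "QQ s (Suc (pt s x)) = QQ t (Suc (pt t x))"
  shows "PP t (pt t x) \<le> PP s (pt s x)"
proof (rule ccontr)
  assume c: "\<not> PP t (pt t x) \<le> PP s (pt s x)"
  have w1: "well_formed s" and w2: "well_formed t" and i1: "i < length s" "s ! i = Push a"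
    and i2: "i' < length t" "t ! i' = Push a" and pp: "PP s i = PP t i'" and qq: "QQ s i = QQ t i'"
    and nn: "seq_size t = seq_size s" and pi: "result_perm t = result_perm s"
    using S unfolding twoseq_def by auto
  define n where "n = seq_size s"
  define \<pi> where "\<pi> = result_perm s"
  define j where "j = pt s x"
  define j' where "j' = pt t x"
  have xr: "1 \<le> x" "x \<le> n" using blk_range[OF i1 x] n_def by auto
  have x': "PP t i' < x" "x \<le> PP t i' + a" using x pp by auto
  have pj: "popped s j x" using pt_popped[OF w1] xr unfolding j_def n_def by auto
  have pj': "popped t j' x" using pt_popped[OF w2] xr nn unfolding j'_def n_def by auto
  have ij: "i < j" using pt_after[OF w1 pj x(1)] .
  have jl: "j < length s" using pj unfolding popped_def by auto
  have jl': "j' < length t" using pj' unfolding popped_def by auto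
  obtain b where b: "s ! j = Pop b" using popped_pop[OF pj] by auto
  have PSj: "PP s (Suc j) = PP s j" using PP_Suc[OF jl] b by auto
  define e where "e = PP t j'"
  have c': "PP s j < e" using c j_def j'_def e_def by auto
  have er: "1 \<le> e" "e \<le> n" using c' PP_le[of t j'] nn n_def e_def by auto
  have "e \<notin> set (outk t j')"
  proof
    assume "e \<in> set (outk t j')"
    then have "n - QQ s j \<le> ix \<pi> e" using out_iff[OF w2, of j'] jl' nn pi qe j_def j'_def
      unfolding n_def \<pi>_def by auto
    then have "e \<in> set (outk s j)" using out_iff[OF w1, of j] jl er unfolding n_def \<pi>_def by auto
    then show False using out_sub[OF w1, of j] jl c' by fastforce
  qed
  then have ew: "e \<in> set (wkk t j')" using in_wk_iff[OF w2, of j'] jl' er e_def by auto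
  have "PP t (Suc i') = PP s i + a" using PP_Suc[OF i2(1)] i2(2) pp by auto
  also have "\<dots> = PP s (Suc i)" using PP_Suc[OF i1(1)] i1(2) by auto
  also have "\<dots> \<le> PP s j" using PP_mono ij by auto
  finally have "PP t (Suc i') < e" using c' by auto
  then have "ps t e > i'" using ps_gt[of e t i'] er nn n_def by auto
  moreover have "ps t x = i'" using blk_ps[OF i2 x'] .
  ultimately have R: "Rel t e x" unfolding Rel_def by auto
  obtain b' where b': "t ! j' = Pop b'" "x \<in> set (take b' (wkk t j'))" using popped_pop[OF pj'] by auto
  have "e \<in> set (take b' (wkk t j'))" using above[OF w2 jl' b'(1) b'(2) ew R] .
  then have "popped t j' e" using pop_popped[OF w2 jl' b'(1)] by auto
  then have "e \<in> set (outk t (Suc j'))" unfolding popped_def by auto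
  then have "n - QQ s (Suc j) \<le> ix \<pi> e" using out_iff[OF w2, of "Suc j'"] jl' nn pi qe2 j_def j'_def
    unfolding n_def \<pi>_def by auto
  then have "e \<in> set (outk s (Suc j))" using out_iff[OF w1, of "Suc j"] jl er unfolding n_def \<pi>_def by auto
  then have "e \<le> PP s (Suc j)" using out_sub[OF w1, of "Suc j"] jl by fastforce
  then show False using PSj c' by auto
qed

lemma main_cross: assumes S: "twoseq s t i i' a" and x: "PP s i < x" "x \<le> PP s i + a"
  shows "QQ s (pt s x) = QQ t (pt t x) \<and> QQ s (Suc (pt s x)) = QQ t (Suc (pt t x)) \<and> PP s (pt s x) = PP t (pt t x)"
proof -
  have S': "twoseq t s i' i a" using twoseq_sym[OF S] .
  have pp: "PP s i = PP t i'" using S unfolding twoseq_def by auto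
  have x': "PP t i' < x" "x \<le> PP t i' + a" using x pp by auto
  have q1: "QQ s (pt s x) = QQ t (pt t x)" using stepW[OF S x] stepW[OF S' x'] by auto
  have q2: "QQ s (Suc (pt s x)) = QQ t (Suc (pt t x))" using stepA[OF S x q1] stepA[OF S' x' q1[symmetric]] by auto
  have p: "PP s (pt s x) = PP t (pt t x)" using stepP[OF S x q1 q2] stepP[OF S' x' q1[symmetric] q2[symmetric]] by auto
  show ?thesis using q1 q2 p by auto
qed

lemma foldl_vertex: "foldl (\<lambda>(p, q) x. (p + fst (delta x), q + snd (delta x))) (p0, q0) xs =
   (p0 + int (sum_list (map push_amt xs)) + int (sum_list (map pop_amt xs)),
    q0 + int (sum_list (map push_amt xs)) - int (sum_list (map pop_amt xs)))"
proof (induction xs arbitrary: p0 q0)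
  case Nil then show ?case by simp
next
  case (Cons y ys) then show ?case by (cases y) (auto simp: algebra_simps)
qed

lemma vertex_eq: "vertex s k = (int (PP s k) + int (QQ s k), int (PP s k) - int (QQ s k))"
  unfolding vertex_def PP_def QQ_def using foldl_vertex[of 0 0 "take k s"] by simp

lemma vertex_inj: "vertex s k = vertex t k' \<Longrightarrow> PP s k = PP t k' \<and> QQ s k = QQ t k'"
  unfolding vertex_eq by auto

theorem mainTheorem11:
  fixes \<alpha> :: "op list" and i j :: nat
  assumes "well_formed \<alpha>" and "reduced \<alpha>"
    and "i < length \<alpha>" and "is_push (\<alpha> ! i)" and "fixed_op \<alpha> i"
    and "j < length \<alpha>" and "is_pop (\<alpha> ! j)" and "corresponds \<alpha> i j"
  shows "fixed_op \<alpha> j"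
proof -
  note w = assms(1) and rs = assms(2) and il = assms(3) and fx = assms(5) and jl = assms(6)
  obtain a where a: "\<alpha> ! i = Push a" using assms(4) by (cases "\<alpha> ! i") auto
  obtain b where b: "\<alpha> ! j = Pop b" using assms(7) by (cases "\<alpha> ! j") auto
  obtain x where xi: "x \<in> support \<alpha> i" and xj: "x \<in> support \<alpha> j"
    using assms(8) unfolding corresponds_def by auto
  have si: "support \<alpha> i = set (take a (inpk \<alpha> i))" unfolding support_def using a cfg_eq[of \<alpha> i] by simp
  have sj: "support \<alpha> j = set (take b (wkk \<alpha> j))" unfolding support_def using b cfg_eq[of \<alpha> j] by simp
  have le: "PP \<alpha> i + a \<le> seq_size \<alpha>" using PP_le[of \<alpha> "Suc i"] PP_Suc[OF il] a by auto
  have inp: "inpk \<alpha> i = [Suc (PP \<alpha> i)..<Suc (seq_size \<alpha>)]" using invD(1)[OF w, of i] il by simp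
  have "take a (inpk \<alpha> i) = [Suc (PP \<alpha> i)..<Suc (PP \<alpha> i) + a]"
    unfolding inp by (rule take_upt) (use le in simp)
  then have x: "PP \<alpha> i < x" "x \<le> PP \<alpha> i + a" using xi si by auto
  have pj: "popped \<alpha> j x" using pop_popped[OF w jl b] xj sj by auto
  have ptj: "pt \<alpha> x = j" using pt_eq[OF w pj] .
  show ?thesis unfolding fixed_op_def
  proof (intro allI impI)
    fix ys assume ry: "reduced ys" and eq: "equivalent \<alpha> ys"
    have wy: "well_formed ys" and nn: "seq_size \<alpha> = seq_size ys" and pi: "result_perm \<alpha> = result_perm ys"
      using eq unfolding equivalent_def by auto
    obtain jb where jb: "jb < length ys" "vertex ys jb = vertex \<alpha> i" "vertex ys (Suc jb) = vertex \<alpha> (Suc i)"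
      using fx ry eq unfolding fixed_op_def by blast
    have v1: "PP ys jb = PP \<alpha> i" "QQ ys jb = QQ \<alpha> i" using vertex_inj[OF jb(2)] by auto
    have v2: "PP ys (Suc jb) = PP \<alpha> (Suc i)" "QQ ys (Suc jb) = QQ \<alpha> (Suc i)" using vertex_inj[OF jb(3)] by auto
    have ya: "ys ! jb = Push a"
    proof (cases "ys ! jb")
      case (Push c)
      then show ?thesis using v1 v2 PP_Suc[OF jb(1)] PP_Suc[OF il] a by auto
    next
      case (Pop c)
      then have "c \<ge> 1" using wf_amt[OF wy jb(1)] by auto
      then show ?thesis using Pop v1 v2 QQ_Suc[OF jb(1)] QQ_Suc[OF il] a by auto
    qed
    have S: "twoseq \<alpha> ys i jb a" unfolding twoseq_def using w wy rs ry nn pi il a jb(1) ya v1 by auto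
    have mc: "QQ \<alpha> (pt \<alpha> x) = QQ ys (pt ys x) \<and> QQ \<alpha> (Suc (pt \<alpha> x)) = QQ ys (Suc (pt ys x)) \<and>
      PP \<alpha> (pt \<alpha> x) = PP ys (pt ys x)" using main_cross[OF S x] .
    have xr: "1 \<le> x" "x \<le> seq_size ys" using x le nn by auto
    have py: "popped ys (pt ys x) x" using pt_popped[OF wy xr] .
    have yl: "pt ys x < length ys" using py unfolding popped_def by auto
    obtain c where c: "ys ! pt ys x = Pop c" using popped_pop[OF py] by auto
    have PS1: "PP ys (Suc (pt ys x)) = PP ys (pt ys x)" using PP_Suc[OF yl] c by auto
    have PS2: "PP \<alpha> (Suc j) = PP \<alpha> j" using PP_Suc[OF jl] b by auto
    show "\<exists>j'<length ys. vertex ys j' = vertex \<alpha> j \<and> vertex ys (Suc j') = vertex \<alpha> (Suc j)"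
      by (rule exI[of _ "pt ys x"]) (use yl mc ptj PS1 PS2 in \<open>auto simp: vertex_eq\<close>)
  qed
qed

end
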